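(* Let $(A,\varphi,\phi_A,[\cdot,\cdot]_A,a_A,K,\langle\cdot,\cdot\rangle)$ be a para-Kähler hom-Lie algebroid with hom-Levi-Civita connection $\nabla$, and let $\widetilde\nabla$ be the dual of the representation $X\mapsto\nabla_X|_{\Gamma(A^1)}$ of $A^1$, i.e. for $X,Y\in\Gamma(A^1)$, $\xi\in\Gamma((A^1)^* )$, $$\langle\widetilde\nabla_X\xi,Y\rangle=a_A(\phi_A(X))\big(\langle\xi,\phi_{A^1}^{-1}(Y)\rangle\big)-\varphi^*\langle\xi,\nabla_{\phi_{A^1}^{-1}(X)}\phi_{A^1}^{-2}(Y)\rangle.$$ Then $(A^1\oplus(A^1)^*,\varphi,\phi,[\cdot,\cdot],a)$ is a hom-Lie algebroid, where for $X,Y\in\Gamma(A^1)$, $\alpha,\beta\in\Gamma((A^1)^* )$: $[X+\alpha,Y+\beta]=[X,Y]_{A^1}+\widetilde\nabla_X\beta-\widetilde\nabla_Y\alpha$, $\phi(X+\alpha)=\phi_{A^1}(X)+\phi_{(A^1)^*}(\alpha)$ with $\phi_{(A^1)^*}=(\phi_{A^1})^\dagger$, and $a(X+\alpha)=a_A(X)$.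
   Context: Standing conventions. $M$ is a smooth manifold, $\varphi:M\to M$ a diffeomorphism, $\varphi^*f=f\circ\varphi$. A hom-bundle $(A\to M,\varphi,\phi_A)$ is a vector bundle $A\to M$ together with an invertible $\mathbb R$-linear map $\phi_A:\Gamma(A)\to\Gamma(A)$ with $\phi_A(fX)=\varphi^*(f)\phi_A(X)$. $\varphi^!TM$ is the pullback bundle; its sections are identified with $\mathbb R$-linear maps $D:C^\infty(M)\to C^\infty(M)$ with $D(fg)=D(f)\varphi^*(g)+\varphi^*(f)D(g)$. A hom-Lie algebroid $(A,\varphi,\phi_A,[\cdot,\cdot]_A,a_A)$ consists of a hom-bundle, a skew-symmetric $\mathbb R$-bilinear bracket on $\Gamma(A)$ with $\phi_A[X,Y]_A=[\phi_A X,\phi_A Y]_A$ and $[\phi_A(X),[Y,Z]_A]_A+[\phi_A(Y),[Z,X]_A]_A+[\phi_A(Z),[X,Y]_A]_A=0$, and a bundle map $a_A:A\to\varphi^!TM$ such that $[X,fY]_A=\varphi^*(f)[X,Y]_A+a_A(\phi_A(X))(f)\phi_A(Y)$, $\varphi^*\circ a_A(X)=a_A(\phi_A(X))\circ\varphi^*$, and $a_A([X,Y]_A)\circ\varphi^*=a_A(\phi_AX)\circ a_A(Y)-a_A(\phi_AY)\circ a_A(X)$. For a hom-bundle $(E,\varphi,\phi_E)$, $\phi_E^\dagger$ on $\Gamma(E^* )$ is $\langle\phi_E^\dagger\xi,e\rangle=\varphi^*\langle\xi,\phi_E^{-1}e\rangle$. Pseudo-Riemannian metric: a symmetric nondegenerate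 bilinear form $\langle\cdot,\cdot\rangle$ on $A$ with $\langle\phi_AX,\phi_AY\rangle=\varphi^*\langle X,Y\rangle$. The hom-Levi-Civita connection is the unique $\mathbb R$-bilinear $\nabla:\Gamma(A)\times\Gamma(A)\to\Gamma(A)$ with $\nabla_{fX}Y=\varphi^*(f)\nabla_XY$, $\nabla_X(fY)=\varphi^*(f)\nabla_XY+a_A(\phi_AX)(f)\phi_A(Y)$, $[X,Y]_A=\nabla_XY-\nabla_YX$, and $a_A(\phi_AX)\langle Y,Z\rangle=\langle\nabla_XY,\phi_AZ\rangle+\langle\phi_AY,\nabla_XZ\rangle$. An almost para-complex structure is an invertible map $K:\Gamma(A)\to\Gamma(A)$ with $(\phi_A\circ K)^2=\mathrm{Id}$, $\phi_A\circ K=K\circ\phi_A$, and such that $A^1=\ker(\phi_A\circ K-\mathrm{Id})$ and $A^{-1}=\ker(\phi_A\circ K+\mathrm{Id})$ have the same rank. $(K,\langle\cdot,\cdot\rangle)$ is almost para-Hermitian if $\langle(\phi_A\circ K)X,(\phi_A\circ K)Y\rangle=-\langle X,Y\rangle$. A para-Kähler hom-Lie algebroid is an almost para-Hermitian hom-Lie algebroid with $\nabla_X\phi_A(KY)=\phi_A(K(\nabla_XY))$ for all $X,Y$. In this situation $A^1$ is $\phi_A$-invariant and closed under $[\cdot,\cdot]_A$ and $\nabla$, and is a hom-Lie algebroid $(A^1,\varphi,\phi_{A^1},[\cdot,\cdot]_{A^1},a_{A^1})$ with the restricted structures. *)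

theory Defs
  imports Complex_Main "HOL-Library.Function_Algebras" "HOL-Library.Product_Plus"
begin

text \<open>C^infty(M) is modelled by an abstract commutative real algebra 'f;
 the pull-back phi^* by a real-algebra automorphism ps of 'f.  The space of sections of a
 vector bundle is a subset S of an abelian group 's, closed under the operations, which is a
 module over 'f (scalar action sm) and finitely generated projective (Serre--Swan).\<close>

definition ralg_aut :: "('f::{comm_ring_1,real_algebra_1} \<Rightarrow> 'f) \<Rightarrow> bool" where
  "ralg_aut ps \<longleftrightarrow> bij ps \<and> (\<forall>f g. ps (f + g) = ps f + ps g) \<and> (\<forall>f g. ps (f * g) = ps f * ps g)
     \<and> ps 1 = 1 \<and> (\<forall>c. ps (of_real c) = of_real c)"

definition module_on :: "'s::ab_group_add set \<Rightarrow> ('f::{comm_ring_1,real_algebra_1} \<Rightarrow> 's \<Rightarrow> 's) \<Rightarrow> bool" where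
  "module_on S sm \<longleftrightarrow> 0 \<in> S \<and> (\<forall>x\<in>S. \<forall>y\<in>S. x + y \<in> S) \<and> (\<forall>x\<in>S. - x \<in> S)
     \<and> (\<forall>f. \<forall>x\<in>S. sm f x \<in> S)
     \<and> (\<forall>f. \<forall>x\<in>S. \<forall>y\<in>S. sm f (x + y) = sm f x + sm f y)
     \<and> (\<forall>f g. \<forall>x\<in>S. sm (f + g) x = sm f x + sm g x)
     \<and> (\<forall>f g. \<forall>x\<in>S. sm (f * g) x = sm f (sm g x))
     \<and> (\<forall>x\<in>S. sm 1 x = x)"

text \<open>'f-linear functionals on S (sections of the dual bundle), extensional outside S.\<close>
definition dual_on :: "'s::ab_group_add set \<Rightarrow> ('f::{comm_ring_1,real_algebra_1} \<Rightarrow> 's \<Rightarrow> 's) \<Rightarrow> ('s \<Rightarrow> 'f) set" where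
  "dual_on S sm = {\<xi>. (\<forall>x\<in>S. \<forall>y\<in>S. \<xi> (x + y) = \<xi> x + \<xi> y) \<and> (\<forall>f. \<forall>x\<in>S. \<xi> (sm f x) = f * \<xi> x)
                      \<and> (\<forall>x. x \<notin> S \<longrightarrow> \<xi> x = 0)}"

text \<open>Finite dual basis (g_j, eta_j), j<n, of S; the trace sum eta_j(g_j) is the rank function.\<close>
definition has_rank :: "'s::ab_group_add set \<Rightarrow> ('f::{comm_ring_1,real_algebra_1} \<Rightarrow> 's \<Rightarrow> 's) \<Rightarrow> 'f \<Rightarrow> bool" where
  "has_rank S sm r \<longleftrightarrow> (\<exists>(n::nat) g \<eta>. (\<forall>j<n. g j \<in> S \<and> \<eta> j \<in> dual_on S sm)
       \<and> (\<forall>x\<in>S. x = (\<Sum>j<n. sm (\<eta> j x) (g j))) \<and> r = (\<Sum>j<n. \<eta> j (g j)))"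

definition vector_bundle :: "'s::ab_group_add set \<Rightarrow> ('f::{comm_ring_1,real_algebra_1} \<Rightarrow> 's \<Rightarrow> 's) \<Rightarrow> bool" where
  "vector_bundle S sm \<longleftrightarrow> module_on S sm \<and> (\<exists>r. has_rank S sm r)"

definition hom_bundle ::
  "('f::{comm_ring_1,real_algebra_1} \<Rightarrow> 'f) \<Rightarrow> 's::ab_group_add set \<Rightarrow> ('f \<Rightarrow> 's \<Rightarrow> 's) \<Rightarrow> ('s \<Rightarrow> 's) \<Rightarrow> bool" where
  "hom_bundle ps S sm ph \<longleftrightarrow> ralg_aut ps \<and> vector_bundle S sm \<and> bij_betw ph S S
     \<and> (\<forall>x\<in>S. \<forall>y\<in>S. ph (x + y) = ph x + ph y) \<and> (\<forall>f. \<forall>x\<in>S. ph (sm f x) = sm (ps f) (ph x))"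

text \<open>Sections of the pull-back bundle phi^! TM: R-linear phi^*-derivations of 'f.\<close>
definition phi_derivation :: "('f::{comm_ring_1,real_algebra_1} \<Rightarrow> 'f) \<Rightarrow> ('f \<Rightarrow> 'f) \<Rightarrow> bool" where
  "phi_derivation ps D \<longleftrightarrow> (\<forall>f g. D (f + g) = D f + D g) \<and> (\<forall>c f. D (of_real c * f) = of_real c * D f)
     \<and> (\<forall>f g. D (f * g) = D f * ps g + ps f * D g)"

definition hom_Lie_algebroid ::
  "('f::{comm_ring_1,real_algebra_1} \<Rightarrow> 'f) \<Rightarrow> 's::ab_group_add set \<Rightarrow> ('f \<Rightarrow> 's \<Rightarrow> 's) \<Rightarrow> ('s \<Rightarrow> 's)
     \<Rightarrow> ('s \<Rightarrow> 's \<Rightarrow> 's) \<Rightarrow> ('s \<Rightarrow> 'f \<Rightarrow> 'f) \<Rightarrow> bool" where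
  "hom_Lie_algebroid ps S sm ph br an \<longleftrightarrow> hom_bundle ps S sm ph
     \<and> (\<forall>x\<in>S. \<forall>y\<in>S. br x y \<in> S)
     \<and> (\<forall>x\<in>S. \<forall>y\<in>S. \<forall>z\<in>S. br (x + y) z = br x z + br y z)
     \<and> (\<forall>c. \<forall>x\<in>S. \<forall>y\<in>S. br (sm (of_real c) x) y = sm (of_real c) (br x y))
     \<and> (\<forall>x\<in>S. \<forall>y\<in>S. br x y = - br y x)
     \<and> (\<forall>x\<in>S. \<forall>y\<in>S. ph (br x y) = br (ph x) (ph y))
     \<and> (\<forall>x\<in>S. \<forall>y\<in>S. \<forall>z\<in>S. br (ph x) (br y z) + br (ph y) (br z x) + br (ph z) (br x y) = 0)
     \<and> (\<forall>x\<in>S. phi_derivation ps (an x))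
     \<and> (\<forall>x\<in>S. \<forall>y\<in>S. an (x + y) = (\<lambda>g. an x g + an y g))
     \<and> (\<forall>f. \<forall>x\<in>S. an (sm f x) = (\<lambda>g. f * an x g))
     \<and> (\<forall>f. \<forall>x\<in>S. \<forall>y\<in>S. br x (sm f y) = sm (ps f) (br x y) + sm (an (ph x) f) (ph y))
     \<and> (\<forall>x\<in>S. \<forall>f. ps (an x f) = an (ph x) (ps f))
     \<and> (\<forall>x\<in>S. \<forall>y\<in>S. \<forall>f. an (br x y) (ps f) = an (ph x) (an y f) - an (ph y) (an x f))"

text \<open>From here on, Gamma(A) is the whole type 'a.\<close>
definition pseudo_metric ::
  "('f::{comm_ring_1,real_algebra_1} \<Rightarrow> 'f) \<Rightarrow> ('f \<Rightarrow> 'a::ab_group_add \<Rightarrow> 'a) \<Rightarrow> ('a \<Rightarrow> 'a) \<Rightarrow> ('a \<Rightarrow> 'a \<Rightarrow> 'f) \<Rightarrow> bool" where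
  "pseudo_metric ps sm ph g \<longleftrightarrow> (\<forall>x y. g x y = g y x) \<and> (\<forall>x. g x \<in> dual_on UNIV sm)
     \<and> bij_betw g UNIV (dual_on UNIV sm)
     \<and> (\<forall>x y. g (ph x) (ph y) = ps (g x y))"

definition hom_LC_connection ::
  "('f::{comm_ring_1,real_algebra_1} \<Rightarrow> 'f) \<Rightarrow> ('f \<Rightarrow> 'a::ab_group_add \<Rightarrow> 'a) \<Rightarrow> ('a \<Rightarrow> 'a)
     \<Rightarrow> ('a \<Rightarrow> 'a \<Rightarrow> 'a) \<Rightarrow> ('a \<Rightarrow> 'f \<Rightarrow> 'f) \<Rightarrow> ('a \<Rightarrow> 'a \<Rightarrow> 'f) \<Rightarrow> ('a \<Rightarrow> 'a \<Rightarrow> 'a) \<Rightarrow> bool" where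
  "hom_LC_connection ps sm ph br an g nb \<longleftrightarrow>
       (\<forall>x y z. nb (x + y) z = nb x z + nb y z) \<and> (\<forall>x y z. nb x (y + z) = nb x y + nb x z)
     \<and> (\<forall>c x y. nb (sm (of_real c) x) y = sm (of_real c) (nb x y))
     \<and> (\<forall>c x y. nb x (sm (of_real c) y) = sm (of_real c) (nb x y))
     \<and> (\<forall>f x y. nb (sm f x) y = sm (ps f) (nb x y))
     \<and> (\<forall>f x y. nb x (sm f y) = sm (ps f) (nb x y) + sm (an (ph x) f) (ph y))
     \<and> (\<forall>x y. br x y = nb x y - nb y x)
     \<and> (\<forall>x y z. an (ph x) (g y z) = g (nb x y) (ph z) + g (ph y) (nb x z))"

text \<open>Almost para-complex structure K; P = phi_A o K is required to be a bundle map
 ('f-linear), so that A^1, A^-1 are sub-bundles.\<close>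
definition almost_para_complex ::
  "('f::{comm_ring_1,real_algebra_1} \<Rightarrow> 'f) \<Rightarrow> ('f \<Rightarrow> 'a::ab_group_add \<Rightarrow> 'a) \<Rightarrow> ('a \<Rightarrow> 'a) \<Rightarrow> ('a \<Rightarrow> 'a) \<Rightarrow> bool" where
  "almost_para_complex ps sm ph K \<longleftrightarrow> bij K
     \<and> (\<forall>x y. ph (K (x + y)) = ph (K x) + ph (K y)) \<and> (\<forall>f x. ph (K (sm f x)) = sm f (ph (K x)))
     \<and> (\<forall>x. ph (K (ph (K x))) = x) \<and> (\<forall>x. ph (K x) = K (ph x))
     \<and> (\<exists>r. has_rank {x. ph (K x) = x} sm r \<and> has_rank {x. ph (K x) = - x} sm r)"

definition almost_para_hermitian ::
  "('f::{comm_ring_1,real_algebra_1} \<Rightarrow> 'f) \<Rightarrow> ('f \<Rightarrow> 'a::ab_group_add \<Rightarrow> 'a) \<Rightarrow> ('a \<Rightarrow> 'a) \<Rightarrow> ('a \<Rightarrow> 'a) \<Rightarrow> ('a \<Rightarrow> 'a \<Rightarrow> 'f) \<Rightarrow> bool" where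
  "almost_para_hermitian ps sm ph K g \<longleftrightarrow> almost_para_complex ps sm ph K \<and> pseudo_metric ps sm ph g
     \<and> (\<forall>x y. g (ph (K x)) (ph (K y)) = - g x y)"

definition para_Kahler ::
  "('f::{comm_ring_1,real_algebra_1} \<Rightarrow> 'f) \<Rightarrow> ('f \<Rightarrow> 'a::ab_group_add \<Rightarrow> 'a) \<Rightarrow> ('a \<Rightarrow> 'a)
     \<Rightarrow> ('a \<Rightarrow> 'a \<Rightarrow> 'a) \<Rightarrow> ('a \<Rightarrow> 'f \<Rightarrow> 'f) \<Rightarrow> ('a \<Rightarrow> 'a) \<Rightarrow> ('a \<Rightarrow> 'a \<Rightarrow> 'f) \<Rightarrow> ('a \<Rightarrow> 'a \<Rightarrow> 'a) \<Rightarrow> bool" where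
  "para_Kahler ps sm ph br an K g nb \<longleftrightarrow> hom_Lie_algebroid ps UNIV sm ph br an
     \<and> almost_para_hermitian ps sm ph K g \<and> hom_LC_connection ps sm ph br an g nb
     \<and> (\<forall>x y. nb x (ph (K y)) = ph (K (nb x y)))"

definition A1 :: "('a \<Rightarrow> 'a) \<Rightarrow> ('a \<Rightarrow> 'a) \<Rightarrow> 'a set" where
  "A1 ph K = {x. ph (K x) = x}"

definition dagger :: "('f::zero \<Rightarrow> 'f) \<Rightarrow> 's set \<Rightarrow> ('s \<Rightarrow> 's) \<Rightarrow> ('s \<Rightarrow> 'f) \<Rightarrow> ('s \<Rightarrow> 'f)" where
  "dagger ps S ph \<xi> = (\<lambda>e. if e \<in> S then ps (\<xi> (inv_into S ph e)) else 0)"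

definition dual_nabla :: "('f::{comm_ring_1,real_algebra_1} \<Rightarrow> 'f) \<Rightarrow> 'a set \<Rightarrow> ('a \<Rightarrow> 'a) \<Rightarrow> ('a \<Rightarrow> 'f \<Rightarrow> 'f)
     \<Rightarrow> ('a \<Rightarrow> 'a \<Rightarrow> 'a) \<Rightarrow> 'a \<Rightarrow> ('a \<Rightarrow> 'f) \<Rightarrow> ('a \<Rightarrow> 'f)" where
  "dual_nabla ps S ph an nb X \<xi> = (\<lambda>Y. if Y \<in> S then
       an (ph X) (\<xi> (inv_into S ph Y)) - ps (\<xi> (nb (inv_into S ph X) (inv_into S ph (inv_into S ph Y))))
     else 0)"

text \<open>Structures on A^1 (+) (A^1)^*, with sections modelled as pairs (X, alpha).\<close>
definition sum_carrier :: "'a::ab_group_add set \<Rightarrow> ('f::{comm_ring_1,real_algebra_1} \<Rightarrow> 'a \<Rightarrow> 'a) \<Rightarrow> ('a \<times> ('a \<Rightarrow> 'f)) set" where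
  "sum_carrier S sm = S \<times> dual_on S sm"

definition sum_smult :: "('f::times \<Rightarrow> 'a \<Rightarrow> 'a) \<Rightarrow> 'f \<Rightarrow> 'a \<times> ('a \<Rightarrow> 'f) \<Rightarrow> 'a \<times> ('a \<Rightarrow> 'f)" where
  "sum_smult sm f p = (sm f (fst p), \<lambda>y. f * snd p y)"

definition sum_phi :: "('f::zero \<Rightarrow> 'f) \<Rightarrow> 'a set \<Rightarrow> ('a \<Rightarrow> 'a) \<Rightarrow> 'a \<times> ('a \<Rightarrow> 'f) \<Rightarrow> 'a \<times> ('a \<Rightarrow> 'f)" where
  "sum_phi ps S ph p = (ph (fst p), dagger ps S ph (snd p))"

definition sum_bracket :: "('a \<Rightarrow> 'a \<Rightarrow> 'a) \<Rightarrow> ('a \<Rightarrow> ('a \<Rightarrow> 'f) \<Rightarrow> ('a \<Rightarrow> 'f::ab_group_add))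
     \<Rightarrow> 'a \<times> ('a \<Rightarrow> 'f) \<Rightarrow> 'a \<times> ('a \<Rightarrow> 'f) \<Rightarrow> 'a \<times> ('a \<Rightarrow> 'f)" where
  "sum_bracket br tn p q = (br (fst p) (fst q), \<lambda>y. tn (fst p) (snd q) y - tn (fst q) (snd p) y)"

definition sum_anchor :: "('a \<Rightarrow> 'f \<Rightarrow> 'f) \<Rightarrow> 'a \<times> ('a \<Rightarrow> 'f) \<Rightarrow> 'f \<Rightarrow> 'f" where
  "sum_anchor an p = an (fst p)"

end

theory Submission
  imports Defs
begin



locale pk =
  fixes ps :: "'f::{comm_ring_1,real_algebra_1} \<Rightarrow> 'f"
    and sm :: "'f \<Rightarrow> 'a::ab_group_add \<Rightarrow> 'a"
    and ph :: "'a \<Rightarrow> 'a" and br :: "'a \<Rightarrow> 'a \<Rightarrow> 'a" and an :: "'a \<Rightarrow> 'f \<Rightarrow> 'f"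
    and K :: "'a \<Rightarrow> 'a" and g :: "'a \<Rightarrow> 'a \<Rightarrow> 'f" and nb :: "'a \<Rightarrow> 'a \<Rightarrow> 'a"
  assumes PK: "para_Kahler ps sm ph br an K g nb"
begin

lemma HLA: "hom_Lie_algebroid ps UNIV sm ph br an" using PK by (simp add: para_Kahler_def)
lemma APH: "almost_para_hermitian ps sm ph K g" using PK by (simp add: para_Kahler_def)
lemma LC: "hom_LC_connection ps sm ph br an g nb" using PK by (simp add: para_Kahler_def)
lemma nbK: "nb x (ph (K y)) = ph (K (nb x y))" using PK by (simp add: para_Kahler_def)
lemma HB: "hom_bundle ps UNIV sm ph" using HLA unfolding hom_Lie_algebroid_def by (metis UNIV_I)
lemma RA: "ralg_aut ps" using HB by (simp add: hom_bundle_def)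
lemma VB: "vector_bundle UNIV sm" using HB by (simp add: hom_bundle_def)
lemma MO: "module_on UNIV sm" using VB by (simp add: vector_bundle_def)
lemma APC: "almost_para_complex ps sm ph K" using APH by (simp add: almost_para_hermitian_def)
lemma PM: "pseudo_metric ps sm ph g" using APH by (simp add: almost_para_hermitian_def)

lemma ps_bij: "bij ps" using RA by (simp add: ralg_aut_def)
lemma ps_add[simp]: "ps (f + h) = ps f + ps h" using RA by (simp add: ralg_aut_def)
lemma ps_mult[simp]: "ps (f * h) = ps f * ps h" using RA by (simp add: ralg_aut_def)
lemma ps_one[simp]: "ps 1 = 1" using RA by (simp add: ralg_aut_def)
lemma ps_of_real[simp]: "ps (of_real c) = of_real c" using RA by (simp add: ralg_aut_def)
lemma ps_zero[simp]: "ps 0 = 0" by (metis add_cancel_right_right ps_add)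
lemma ps_minus[simp]: "ps (- f) = - ps f" by (metis add.right_inverse eq_neg_iff_add_eq_0 ps_add ps_zero)
lemma ps_diff[simp]: "ps (f - h) = ps f - ps h" by (metis diff_conv_add_uminus ps_add ps_minus)
lemma ps_inj: "ps f = ps h \<longleftrightarrow> f = h" using ps_bij by (meson bij_def injD)
definition "psi = inv ps"
lemma ps_psi[simp]: "ps (psi f) = f" using ps_bij by (simp add: psi_def bij_is_surj surj_f_inv_f)
lemma psi_ps[simp]: "psi (ps f) = f" using ps_bij by (simp add: psi_def bij_is_inj)

lemma ph_bij: "bij ph" using HB by (simp add: hom_bundle_def)
lemma ph_add[simp]: "ph (x + y) = ph x + ph y" using HB by (simp add: hom_bundle_def)
lemma ph_sm[simp]: "ph (sm f x) = sm (ps f) (ph x)" using HB by (simp add: hom_bundle_def)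
lemma ph_zero[simp]: "ph 0 = 0" by (metis add_cancel_right_right ph_add)
lemma ph_minus[simp]: "ph (- x) = - ph x" by (metis add.right_inverse eq_neg_iff_add_eq_0 ph_add ph_zero)
lemma ph_diff[simp]: "ph (x - y) = ph x - ph y" by (metis diff_conv_add_uminus ph_add ph_minus)
lemma ph_inj: "ph x = ph y \<longleftrightarrow> x = y" using ph_bij by (meson bij_def injD)
definition "ih = inv ph"
lemma ph_ih[simp]: "ph (ih x) = x" using ph_bij by (simp add: ih_def bij_is_surj surj_f_inv_f)
lemma ih_ph[simp]: "ih (ph x) = x" using ph_bij by (simp add: ih_def bij_is_inj)
lemma ih_add[simp]: "ih (x + y) = ih x + ih y" by (metis ph_add ih_ph ph_ih)
lemma ih_minus[simp]: "ih (- x) = - ih x" by (metis ph_minus ih_ph ph_ih)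
lemma ih_diff[simp]: "ih (x - y) = ih x - ih y" by (metis ph_diff ih_ph ph_ih)
lemma ih_zero[simp]: "ih 0 = 0" by (metis ph_zero ih_ph)
lemma ih_sm[simp]: "ih (sm f x) = sm (psi f) (ih x)" by (metis ph_sm ih_ph ph_ih ps_psi)

lemma sm_addr[simp]: "sm f (x + y) = sm f x + sm f y" using MO by (simp add: module_on_def)
lemma sm_addl: "sm (f + h) x = sm f x + sm h x" using MO by (simp add: module_on_def)
lemma sm_mult: "sm (f * h) x = sm f (sm h x)" using MO by (simp add: module_on_def)
lemma sm_one[simp]: "sm 1 x = x" using MO by (simp add: module_on_def)
lemma sm_zero[simp]: "sm f 0 = 0" by (metis add_cancel_right_right sm_addr)
lemma sm_minus[simp]: "sm f (- x) = - sm f x" by (metis add.right_inverse eq_neg_iff_add_eq_0 sm_addr sm_zero)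
lemma sm_diff[simp]: "sm f (x - y) = sm f x - sm f y" by (metis diff_conv_add_uminus sm_addr sm_minus)

lemma an_der: "phi_derivation ps (an x)" using HLA unfolding hom_Lie_algebroid_def by (metis UNIV_I)
lemma an_fadd[simp]: "an x (f + h) = an x f + an x h" using an_der by (simp add: phi_derivation_def)
lemma an_fmult: "an x (f * h) = an x f * ps h + ps f * an x h" using an_der by (simp add: phi_derivation_def)
lemma an_fzero[simp]: "an x 0 = 0" by (metis add_cancel_right_right an_fadd)
lemma an_fminus[simp]: "an x (- f) = - an x f" by (metis add.right_inverse eq_neg_iff_add_eq_0 an_fadd an_fzero)
lemma an_fdiff[simp]: "an x (f - h) = an x f - an x h" by (metis diff_conv_add_uminus an_fadd an_fminus)
lemma an_one[simp]: "an x 1 = 0"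
proof -
  have "an x 1 = an x 1 + an x 1" using an_fmult[of x 1 1] by simp
  thus ?thesis by simp
qed
lemma an_ofreal[simp]: "an x (of_real c) = 0"
  using an_der unfolding phi_derivation_def by (metis an_one mult.right_neutral mult_zero_right)
lemma an_add: "an (x + y) h = an x h + an y h" using HLA unfolding hom_Lie_algebroid_def by (metis UNIV_I)
lemma an_sm: "an (sm f x) h = f * an x h" using HLA unfolding hom_Lie_algebroid_def by (metis UNIV_I)
lemma an_ps: "ps (an x f) = an (ph x) (ps f)" using HLA unfolding hom_Lie_algebroid_def by (metis UNIV_I)
lemma an_br: "an (br x y) (ps f) = an (ph x) (an y f) - an (ph y) (an x f)" using HLA unfolding hom_Lie_algebroid_def by (metis UNIV_I)

lemma br_addl: "br (x + y) z = br x z + br y z" using HLA unfolding hom_Lie_algebroid_def by (metis UNIV_I)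
lemma br_skew: "br x y = - br y x" using HLA unfolding hom_Lie_algebroid_def by (metis UNIV_I)
lemma br_addr: "br z (x + y) = br z x + br z y" by (metis br_addl br_skew minus_add_distrib)
lemma br_ph: "ph (br x y) = br (ph x) (ph y)" using HLA unfolding hom_Lie_algebroid_def by (metis UNIV_I)
lemma jac: "br (ph x) (br y z) + br (ph y) (br z x) + br (ph z) (br x y) = 0" using HLA unfolding hom_Lie_algebroid_def by (metis UNIV_I)
lemma leib: "br x (sm f y) = sm (ps f) (br x y) + sm (an (ph x) f) (ph y)" using HLA unfolding hom_Lie_algebroid_def by (metis UNIV_I)

lemma g_sym: "g x y = g y x" using PM by (simp add: pseudo_metric_def)
lemma g_dual: "g x \<in> dual_on UNIV sm" using PM by (simp add: pseudo_metric_def)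
lemma g_addr[simp]: "g x (y + z) = g x y + g x z" using g_dual by (simp add: dual_on_def)
lemma g_smr[simp]: "g x (sm f y) = f * g x y" using g_dual by (simp add: dual_on_def)
lemma g_addl[simp]: "g (y + z) x = g y x + g z x" by (metis g_addr g_sym)
lemma g_sml[simp]: "g (sm f y) x = f * g y x" by (metis g_smr g_sym)
lemma g_zr[simp]: "g x 0 = 0" by (metis add_cancel_right_right g_addr)
lemma g_zl[simp]: "g 0 x = 0" by (metis g_zr g_sym)
lemma g_minr[simp]: "g x (- y) = - g x y" by (metis add.right_inverse eq_neg_iff_add_eq_0 g_addr g_zr)
lemma g_minl[simp]: "g (- y) x = - g y x" by (metis g_minr g_sym)
lemma g_diffr[simp]: "g x (y - z) = g x y - g x z" by (metis diff_conv_add_uminus g_addr g_minr)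
lemma g_diffl[simp]: "g (y - z) x = g y x - g z x" by (metis g_diffr g_sym)
lemma g_inj: "inj g" using PM by (simp add: pseudo_metric_def bij_betw_def)
lemma g_ph: "g (ph x) (ph y) = ps (g x y)" using PM by (simp add: pseudo_metric_def)
lemma g_nondeg: assumes "\<And>w. g x w = 0" shows "x = 0"
proof -
  have "g x = g 0" using assms by (auto simp: fun_eq_iff)
  thus ?thesis using g_inj by (simp add: inj_eq)
qed

lemma nb_addl: "nb (x + y) z = nb x z + nb y z" using LC unfolding hom_LC_connection_def by metis
lemma nb_addr: "nb x (y + z) = nb x y + nb x z" using LC unfolding hom_LC_connection_def by metis
lemma nb_sml: "nb (sm f x) y = sm (ps f) (nb x y)" using LC unfolding hom_LC_connection_def by metis
lemma nb_smr: "nb x (sm f y) = sm (ps f) (nb x y) + sm (an (ph x) f) (ph y)" using LC unfolding hom_LC_connection_def by metis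
lemma nb_tor: "br x y = nb x y - nb y x" using LC unfolding hom_LC_connection_def by metis
lemma nb_met: "an (ph x) (g y z) = g (nb x y) (ph z) + g (ph y) (nb x z)" using LC unfolding hom_LC_connection_def by metis
lemma nb_zl[simp]: "nb 0 y = 0" by (metis add_cancel_right_right nb_addl)
lemma nb_zr[simp]: "nb x 0 = 0" by (metis add_cancel_right_right nb_addr)
lemma nb_minl: "nb (- x) y = - nb x y" by (metis add.right_inverse eq_neg_iff_add_eq_0 nb_addl nb_zl)
lemma nb_minr: "nb x (- y) = - nb x y" by (metis add.right_inverse eq_neg_iff_add_eq_0 nb_addr nb_zr)
lemma nb_diffl: "nb (x - y) z = nb x z - nb y z" by (metis diff_conv_add_uminus nb_addl nb_minl)
lemma nb_diffr: "nb z (x - y) = nb z x - nb z y" by (metis diff_conv_add_uminus nb_addr nb_minr)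

lemma P_add: "ph (K (x + y)) = ph (K x) + ph (K y)" using APC unfolding almost_para_complex_def by metis
lemma P_sm: "ph (K (sm f x)) = sm f (ph (K x))" using APC unfolding almost_para_complex_def by metis
lemma P_inv: "ph (K (ph (K x))) = x" using APC unfolding almost_para_complex_def by metis
lemma P_comm: "ph (K x) = K (ph x)" using APC unfolding almost_para_complex_def by metis
lemma g_P: "g (ph (K x)) (ph (K y)) = - g x y" using APH by (simp add: almost_para_hermitian_def)
lemma rankS: "\<exists>r. has_rank {x. ph (K x) = x} sm r" using APC by (auto simp: almost_para_complex_def)

end


context pk begin

lemma memS: "x \<in> A1 ph K \<longleftrightarrow> ph (K x) = x" by (simp add: A1_def)
lemma P_zero: "ph (K 0) = 0" by (metis add_cancel_right_right P_add)
lemma P_minus: "ph (K (- x)) = - ph (K x)" by (metis add.right_inverse eq_neg_iff_add_eq_0 P_add P_zero)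
lemma P_diff: "ph (K (x - y)) = ph (K x) - ph (K y)" by (metis diff_conv_add_uminus P_add P_minus)
lemma S_add: "x \<in> A1 ph K \<Longrightarrow> y \<in> A1 ph K \<Longrightarrow> x + y \<in> A1 ph K" by (simp add: memS P_add)
lemma S_diff: "x \<in> A1 ph K \<Longrightarrow> y \<in> A1 ph K \<Longrightarrow> x - y \<in> A1 ph K" by (simp add: memS P_diff)
lemma S_minus: "x \<in> A1 ph K \<Longrightarrow> - x \<in> A1 ph K" by (simp add: memS P_minus)
lemma S_zero: "0 \<in> A1 ph K" by (simp add: memS P_zero)
lemma S_sm: "x \<in> A1 ph K \<Longrightarrow> sm f x \<in> A1 ph K" by (simp add: memS P_sm)
lemma P_ph: "ph (K (ph y)) = ph (ph (K y))" by (metis P_comm)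
lemma S_ph: "x \<in> A1 ph K \<Longrightarrow> ph x \<in> A1 ph K" by (simp add: memS P_ph)
lemma S_ih: "x \<in> A1 ph K \<Longrightarrow> ih x \<in> A1 ph K"
  by (metis memS P_ph ph_ih ph_inj)
lemma S_ph_iff: "ph x \<in> A1 ph K \<longleftrightarrow> x \<in> A1 ph K" by (metis S_ih S_ph ih_ph)
lemma S_ih_iff: "ih x \<in> A1 ph K \<longleftrightarrow> x \<in> A1 ph K" by (metis S_ih S_ph ph_ih)
lemma S_nb: "y \<in> A1 ph K \<Longrightarrow> nb x y \<in> A1 ph K" by (metis memS nbK)
lemma S_br: "x \<in> A1 ph K \<Longrightarrow> y \<in> A1 ph K \<Longrightarrow> br x y \<in> A1 ph K" by (simp add: nb_tor S_nb S_diff)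
lemma br_minr: "br a (- b) = - br a b" by (metis add.right_inverse add_cancel_right_right br_addr eq_neg_iff_add_eq_0)
lemma two_zero: fixes u :: 'f assumes "u + u = 0" shows "u = 0"
proof -
  have "(of_real (1/2) :: 'f) * (u + u) = (of_real (1/2) + of_real (1/2)) * u" by (simp add: algebra_simps)
  also have "\<dots> = u" by (simp add: of_real_add[symmetric])
  finally have "(of_real (1/2) :: 'f) * (u + u) = u" .
  thus ?thesis using assms by simp
qed
lemma iso: "x \<in> A1 ph K \<Longrightarrow> y \<in> A1 ph K \<Longrightarrow> g x y = 0"
  by (metis memS g_P two_zero add.right_inverse)
lemma inv_S: "x \<in> A1 ph K \<Longrightarrow> inv_into (A1 ph K) ph x = ih x"
  by (metis S_ih inv_into_f_eq ph_bij bij_is_inj inj_on_subset subset_UNIV ph_ih)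

(* uniqueness: ph commutes with nb *)
definition "nb2 x y = ih (nb (ph x) (ph y))"
lemma nb2_tor: "nb2 x y - nb2 y x = br x y"
  by (simp add: nb2_def nb_tor[symmetric] br_ph[symmetric] ih_diff[symmetric])
lemma nb2_met: "an (ph x) (g y z) = g (nb2 x y) (ph z) + g (ph y) (nb2 x z)"
proof -
  have "ps (an (ph x) (g y z)) = an (ph (ph x)) (g (ph y) (ph z))" by (simp add: an_ps g_ph)
  also have "\<dots> = g (nb (ph x) (ph y)) (ph (ph z)) + g (ph (ph y)) (nb (ph x) (ph z))" by (rule nb_met)
  also have "\<dots> = g (ph (nb2 x y)) (ph (ph z)) + g (ph (ph y)) (ph (nb2 x z))" by (simp add: nb2_def)
  also have "\<dots> = ps (g (nb2 x y) (ph z) + g (ph y) (nb2 x z))" by (simp add: g_ph)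
  finally show ?thesis by (simp only: ps_inj)
qed
lemma nb_nb2: "nb x y = nb2 x y"
proof -
  define T where "T x y z = g (nb x y - nb2 x y) (ph z)" for x y z
  have sym: "T x y z = T y x z" for x y z
  proof -
    have "nb x y - nb2 x y = nb y x - nb2 y x" using nb_tor[of x y] nb2_tor[of x y]
      by (metis (no_types, lifting) add_diff_cancel_left' diff_add_cancel diff_diff_eq2)
    thus ?thesis by (simp add: T_def)
  qed
  have anti: "T x y z = - T x z y" for x y z
  proof -
    have "g (nb x y) (ph z) + g (ph y) (nb x z) = g (nb2 x y) (ph z) + g (ph y) (nb2 x z)"
      using nb_met nb2_met by metis
    hence "g (nb x y) (ph z) - g (nb2 x y) (ph z) = - (g (nb x z) (ph y) - g (nb2 x z) (ph y))"
      by (simp add: g_sym[of "ph y"] algebra_simps)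
    thus ?thesis by (simp add: T_def)
  qed
  have "T x y z = 0" for x y z
  proof -
    have "T x y z = - T x y z" by (metis anti sym minus_minus)
    thus ?thesis using two_zero by (metis add.right_inverse)
  qed
  hence "g (nb x y - nb2 x y) w = 0" for w unfolding T_def by (metis ph_ih)
  hence "nb x y - nb2 x y = 0" by (rule g_nondeg)
  thus ?thesis by simp
qed
lemma nb_ph: "nb (ph x) (ph y) = ph (nb x y)" by (metis nb_nb2 nb2_def ph_ih)
lemma ih_nb: "ih (nb x y) = nb (ih x) (ih y)" by (metis nb_ph ih_ph ph_ih)
lemma ih_br: "ih (br x y) = br (ih x) (ih y)" by (metis br_ph ih_ph ph_ih)

lemma star: "a \<in> A1 ph K \<Longrightarrow> b \<in> A1 ph K \<Longrightarrow>
   g (nb a b) (ph c) = an (ph a) (g b c) - g (ph b) (br a c)"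
proof -
  assume a: "a \<in> A1 ph K" and b: "b \<in> A1 ph K"
  have "g (ph b) (nb c a) = 0" using iso S_ph S_nb a b by blast
  moreover have "nb a c = nb c a + br a c" by (simp add: nb_tor)
  ultimately have "g (ph b) (nb a c) = g (ph b) (br a c)" by simp
  thus ?thesis using nb_met[of a b c] by (simp add: algebra_simps)
qed

lemma T1form: assumes x: "x \<in> A1 ph K" and y: "y \<in> A1 ph K" and z: "z \<in> A1 ph K"
  shows "g (nb (ph x) (nb y z)) (ph (ph c1)) = an (ph (ph x)) (an (ph y) (g z c1))
     - an (ph (ph x)) (g (ph z) (br y c1)) - an (ph (ph y)) (g (ph z) (br x c1))
     + g (ph (ph z)) (br (ph y) (br x c1))"
proof -
  have nyz: "nb y z \<in> A1 ph K" using S_nb z by blast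
  have e1: "g (nb (ph x) (nb y z)) (ph (ph c1)) = an (ph (ph x)) (g (nb y z) (ph c1)) - g (ph (nb y z)) (br (ph x) (ph c1))"
    using star[OF S_ph[OF x] nyz] .
  have e2: "g (nb y z) (ph c1) = an (ph y) (g z c1) - g (ph z) (br y c1)" using star[OF y z] .
  define x0 where "x0 = ih x"
  define c0 where "c0 = ih c1"
  have bx: "br x c1 = ph (br x0 c0)" by (simp add: x0_def c0_def br_ph)
  have e3: "g (ph (nb y z)) (br (ph x) (ph c1)) = ps (g (nb y z) (br x c1))"
    by (simp add: br_ph[symmetric] g_ph)
  have e4: "g (nb y z) (br x c1) = an (ph y) (g z (br x0 c0)) - g (ph z) (br y (br x0 c0))"
    unfolding bx using star[OF y z] .
  have e5: "ps (g (nb y z) (br x c1)) = an (ph (ph y)) (g (ph z) (br x c1)) - g (ph (ph z)) (br (ph y) (br x c1))"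
  proof -
    have "ps (g z (br x0 c0)) = g (ph z) (br x c1)" by (simp add: bx g_ph)
    moreover have "ps (g (ph z) (br y (br x0 c0))) = g (ph (ph z)) (br (ph y) (br x c1))"
      by (simp add: bx g_ph br_ph[symmetric])
    ultimately show ?thesis unfolding e4 by (simp add: an_ps)
  qed
  show ?thesis unfolding e1 e2 e3 e5 by (simp add: algebra_simps)
qed

lemma T3form: assumes x: "x \<in> A1 ph K" and y: "y \<in> A1 ph K" and z: "z \<in> A1 ph K"
  shows "g (nb (br x y) (ph z)) (ph (ph c1)) = an (ph (ph x)) (an (ph y) (g z c1))
     - an (ph (ph y)) (an (ph x) (g z c1)) - g (ph (ph z)) (br (br x y) (ph c1))"
proof -
  have "g (nb (br x y) (ph z)) (ph (ph c1)) = an (ph (br x y)) (g (ph z) (ph c1)) - g (ph (ph z)) (br (br x y) (ph c1))"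
    using star[OF S_br[OF x y] S_ph[OF z]] .
  also have "an (ph (br x y)) (g (ph z) (ph c1)) = an (br (ph x) (ph y)) (ps (g z c1))" by (simp add: br_ph g_ph)
  also have "\<dots> = an (ph (ph x)) (an (ph y) (g z c1)) - an (ph (ph y)) (an (ph x) (g z c1))" by (rule an_br)
  finally show ?thesis .
qed

lemma flat: assumes x: "x \<in> A1 ph K" and y: "y \<in> A1 ph K" and z: "z \<in> A1 ph K"
  shows "nb (ph x) (nb y z) - nb (ph y) (nb x z) - nb (br x y) (ph z) = 0"
proof (rule g_nondeg)
  fix w
  define c1 where "c1 = ih (ih w)"
  have w: "w = ph (ph c1)" by (simp add: c1_def)
  have J: "br (ph y) (br x c1) - br (ph x) (br y c1) + br (br x y) (ph c1) = 0"
  proof -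
    have h1: "br (ph y) (br x c1) = - br (ph y) (br c1 x)" by (metis br_skew br_minr)
    have h2: "br (br x y) (ph c1) = - br (ph c1) (br x y)" by (metis br_skew)
    have "br (ph y) (br x c1) - br (ph x) (br y c1) + br (br x y) (ph c1) = - (br (ph x) (br y c1) + br (ph y) (br c1 x) + br (ph c1) (br x y))"
      by (simp add: h1 h2 algebra_simps)
    thus ?thesis by (simp add: jac)
  qed
  have "g (nb (ph x) (nb y z) - nb (ph y) (nb x z) - nb (br x y) (ph z)) (ph (ph c1))
      = g (ph (ph z)) (br (ph y) (br x c1) - br (ph x) (br y c1) + br (br x y) (ph c1))"
  proof -
    have "g (nb (ph x) (nb y z) - nb (ph y) (nb x z) - nb (br x y) (ph z)) (ph (ph c1))
       = g (nb (ph x) (nb y z)) (ph (ph c1)) - g (nb (ph y) (nb x z)) (ph (ph c1)) - g (nb (br x y) (ph z)) (ph (ph c1))"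
      by simp
    also have "\<dots> = g (ph (ph z)) (br (ph y) (br x c1) - br (ph x) (br y c1) + br (br x y) (ph c1))"
      unfolding T1form[OF x y z] T1form[OF y x z] T3form[OF x y z] by (simp add: algebra_simps)
    finally show ?thesis .
  qed
  also have "\<dots> = 0" by (simp add: J)
  finally show "g (nb (ph x) (nb y z) - nb (ph y) (nb x z) - nb (br x y) (ph z)) w = 0" using w by simp
qed

end


context pk begin

abbreviation "SS \<equiv> A1 ph K"
abbreviation "DD \<equiv> dual_on SS sm"
abbreviation "tn \<equiv> dual_nabla ps SS ph an nb"
abbreviation "dg \<equiv> dagger ps SS ph"

declare S_ph_iff[simp] S_ih_iff[simp] S_nb[simp] S_sm[simp] S_add[simp] S_diff[simp] S_minus[simp] S_zero[simp] S_br[simp]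

lemma psi_add[simp]: "psi (f + h) = psi f + psi h" by (metis ps_add ps_psi psi_ps)
lemma psi_mult[simp]: "psi (f * h) = psi f * psi h" by (metis ps_mult ps_psi psi_ps)

lemma D_add: "\<xi> \<in> DD \<Longrightarrow> x \<in> SS \<Longrightarrow> y \<in> SS \<Longrightarrow> \<xi> (x + y) = \<xi> x + \<xi> y" by (simp add: dual_on_def)
lemma D_sm: "\<xi> \<in> DD \<Longrightarrow> x \<in> SS \<Longrightarrow> \<xi> (sm f x) = f * \<xi> x" by (simp add: dual_on_def)
lemma D_out: "\<xi> \<in> DD \<Longrightarrow> x \<notin> SS \<Longrightarrow> \<xi> x = 0" by (simp add: dual_on_def)
lemma D_zero: "\<xi> \<in> DD \<Longrightarrow> \<xi> 0 = 0" by (metis D_add S_zero add_cancel_right_right add_0)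
lemma D_minus: "\<xi> \<in> DD \<Longrightarrow> x \<in> SS \<Longrightarrow> \<xi> (- x) = - \<xi> x"
  by (metis D_add D_zero S_minus add.right_inverse eq_neg_iff_add_eq_0)
lemma D_diff: "\<xi> \<in> DD \<Longrightarrow> x \<in> SS \<Longrightarrow> y \<in> SS \<Longrightarrow> \<xi> (x - y) = \<xi> x - \<xi> y"
  by (metis D_add D_minus S_minus diff_conv_add_uminus)

lemma dg_eq: "dg \<xi> e = (if e \<in> SS then ps (\<xi> (ih e)) else 0)" by (simp add: dagger_def inv_S)
lemma tn_eq: "X \<in> SS \<Longrightarrow> tn X \<xi> Y = (if Y \<in> SS then an (ph X) (\<xi> (ih Y)) - ps (\<xi> (nb (ih X) (ih (ih Y)))) else 0)"
  by (simp add: dual_nabla_def inv_S)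

lemma dg_D: "\<xi> \<in> DD \<Longrightarrow> dg \<xi> \<in> DD"
  unfolding dual_on_def[of SS sm] by (auto simp: dg_eq D_add D_sm)

definition "dgi \<xi> = (\<lambda>e. if e \<in> SS then psi (\<xi> (ph e)) else 0)"
lemma dgi_D: "\<xi> \<in> DD \<Longrightarrow> dgi \<xi> \<in> DD"
  unfolding dual_on_def[of SS sm] by (auto simp: dgi_def D_add D_sm)
lemma dg_dgi: "\<xi> \<in> DD \<Longrightarrow> dg (dgi \<xi>) = \<xi>"
  by (auto simp: fun_eq_iff dg_eq dgi_def D_out)
lemma dgi_dg: "\<xi> \<in> DD \<Longrightarrow> dgi (dg \<xi>) = \<xi>"
  by (auto simp: fun_eq_iff dg_eq dgi_def D_out)

lemma tn_out: "X \<in> SS \<Longrightarrow> Y \<notin> SS \<Longrightarrow> tn X \<xi> Y = 0" by (simp add: tn_eq)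

lemma tn_D: assumes X: "X \<in> SS" and xi: "\<xi> \<in> DD" shows "tn X \<xi> \<in> DD"
proof -
  have add: "tn X \<xi> (Y1 + Y2) = tn X \<xi> Y1 + tn X \<xi> Y2" if "Y1 \<in> SS" "Y2 \<in> SS" for Y1 Y2
    using that X xi by (simp add: tn_eq D_add nb_addr)
  have smf: "tn X \<xi> (sm f Y) = f * tn X \<xi> Y" if Y: "Y \<in> SS" for f Y
  proof -
    have e1: "\<xi> (ih (sm f Y)) = psi f * \<xi> (ih Y)" using Y xi by (simp add: D_sm)
    have e2: "nb (ih X) (ih (ih (sm f Y))) = sm (psi f) (nb (ih X) (ih (ih Y))) + sm (an X (psi (psi f))) (ih Y)"
      by (simp add: nb_smr)
    have e3: "\<xi> (nb (ih X) (ih (ih (sm f Y)))) = psi f * \<xi> (nb (ih X) (ih (ih Y))) + an X (psi (psi f)) * \<xi> (ih Y)"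
      unfolding e2 using Y X xi by (simp add: D_sm D_add)
    have e4: "ps (an X (psi (psi f))) = an (ph X) (psi f)" by (simp add: an_ps)
    show ?thesis using Y X unfolding tn_eq[OF X] e1 e3
      by (simp add: an_fmult e4 algebra_simps)
  qed
  show ?thesis unfolding dual_on_def[of SS sm] using add smf tn_out[OF X] by auto
qed

lemma tn_addX: "X \<in> SS \<Longrightarrow> Y \<in> SS \<Longrightarrow> \<xi> \<in> DD \<Longrightarrow> tn (X + Y) \<xi> w = tn X \<xi> w + tn Y \<xi> w"
  by (simp add: tn_eq an_add nb_addl D_add)
lemma tn_smX: "X \<in> SS \<Longrightarrow> \<xi> \<in> DD \<Longrightarrow> tn (sm f X) \<xi> w = ps f * tn X \<xi> w"
  by (simp add: tn_eq an_sm nb_sml D_sm algebra_simps)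
lemma tn_add\<xi>: "X \<in> SS \<Longrightarrow> tn X (\<lambda>y. a y + b y) w = tn X a w + tn X b w"
  by (simp add: tn_eq)
lemma tn_diff\<xi>: "X \<in> SS \<Longrightarrow> tn X (\<lambda>y. a y - b y) w = tn X a w - tn X b w"
  by (simp add: tn_eq)
lemma tn_sm\<xi>: "X \<in> SS \<Longrightarrow> tn X (\<lambda>y. f * a y) w = ps f * tn X a w + an (ph X) f * dg a w"
  by (simp add: tn_eq dg_eq an_fmult algebra_simps)

lemma dg_tn: assumes X: "X \<in> SS" and xi: "\<xi> \<in> DD" shows "dg (tn X \<xi>) w = tn (ph X) (dg \<xi>) w"
  using X xi by (simp add: tn_eq dg_eq an_ps ih_nb)

end


context pk begin

lemma Jrep: assumes X: "X \<in> SS" and Y: "Y \<in> SS" and ga: "\<gamma> \<in> DD"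
  shows "tn (ph X) (tn Y \<gamma>) w - tn (ph Y) (tn X \<gamma>) w - tn (br X Y) (dg \<gamma>) w = 0"
proof (cases "w \<in> SS")
  case False thus ?thesis using X Y by (simp add: tn_eq)
next
  case True
  have fl: "nb (ih X) (nb (ih (ih Y)) (ih (ih (ih (ih w))))) - nb (ih Y) (nb (ih (ih X)) (ih (ih (ih (ih w)))))
     - nb (br (ih (ih X)) (ih (ih Y))) (ih (ih (ih w))) = 0"
    using flat[of "ih (ih X)" "ih (ih Y)" "ih (ih (ih (ih w)))"] X Y True by simp
  have gfl0: "\<gamma> (nb (ih X) (nb (ih (ih Y)) (ih (ih (ih (ih w)))))) - \<gamma> (nb (ih Y) (nb (ih (ih X)) (ih (ih (ih (ih w))))))
     = \<gamma> (nb (br (ih (ih X)) (ih (ih Y))) (ih (ih (ih w))))"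
    using arg_cong[OF fl, of \<gamma>] X Y True ga by (simp add: D_diff D_zero)
  have gfl: "\<gamma> (nb (ih X) (nb (ih (ih Y)) (ih (ih (ih (ih w)))))) = \<gamma> (nb (ih Y) (nb (ih (ih X)) (ih (ih (ih (ih w))))))
     + \<gamma> (nb (br (ih (ih X)) (ih (ih Y))) (ih (ih (ih w))))"
    using gfl0 by (metis add.commute diff_add_cancel)
  show ?thesis using X Y True ga
    by (simp add: tn_eq dg_eq ih_nb ih_br br_ph an_ps an_br gfl algebra_simps)
qed

end



lemma sum_fun_apply: "(\<Sum>j\<in>A. f j) y = (\<Sum>j\<in>A. f j y)"
  by (induct A rule: infinite_finite_induct) auto
lemma sum_split_nat: fixes n m :: nat shows "(\<Sum>j<n+m. F j) = (\<Sum>j<n. F j) + (\<Sum>j<m. F (n + j))"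
  by (induct m) (auto simp: add.assoc)

context pk begin

abbreviation "CC \<equiv> sum_carrier SS sm"
abbreviation "ss \<equiv> sum_smult sm"
abbreviation "PH \<equiv> sum_phi ps SS ph"
abbreviation "BB \<equiv> sum_bracket br tn"
abbreviation "AN \<equiv> sum_anchor an"

lemma br_smc: "br (sm (of_real c) x) y = sm (of_real c) (br x y)"
  using HLA unfolding hom_Lie_algebroid_def by (metis UNIV_I)

lemma C_mem: "p \<in> CC \<longleftrightarrow> fst p \<in> SS \<and> snd p \<in> DD" by (cases p) (simp add: sum_carrier_def)

lemma D_0: "(0::'a \<Rightarrow> 'f) \<in> DD" by (simp add: dual_on_def)
lemma D_plus: "\<alpha> \<in> DD \<Longrightarrow> \<beta> \<in> DD \<Longrightarrow> \<alpha> + \<beta> \<in> DD" by (simp add: dual_on_def algebra_simps)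
lemma D_uminus: "\<alpha> \<in> DD \<Longrightarrow> - \<alpha> \<in> DD" by (simp add: dual_on_def algebra_simps)
lemma D_scal: "\<alpha> \<in> DD \<Longrightarrow> (\<lambda>y. f * \<alpha> y) \<in> DD" by (simp add: dual_on_def algebra_simps)
lemma D_minus_fun: "\<alpha> \<in> DD \<Longrightarrow> \<beta> \<in> DD \<Longrightarrow> (\<lambda>y. \<alpha> y - \<beta> y) \<in> DD" by (simp add: dual_on_def algebra_simps)

lemma D_sum: fixes n :: nat shows "\<alpha> \<in> DD \<Longrightarrow> (\<And>j. j < n \<Longrightarrow> u j \<in> SS) \<Longrightarrow> \<alpha> (\<Sum>j<n. u j) = (\<Sum>j<n. \<alpha> (u j))"
proof (induct n)
  case 0 thus ?case by (simp add: D_zero)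
next
  case (Suc n)
  have S: "(\<Sum>j<n. u j) \<in> SS" using Suc(3) by (induct n) auto
  show ?case using Suc S by (simp add: D_add)
qed

lemma module_C: "module_on CC ss"
  unfolding module_on_def by (auto simp: C_mem sum_smult_def D_0 D_plus D_uminus D_scal sm_addl sm_mult
     algebra_simps fun_eq_iff)

lemma rank_C: "\<exists>r. has_rank CC ss r"
proof -
  obtain r where "has_rank SS sm r" using rankS by (auto simp: A1_def)
  then obtain n :: nat and gg \<eta> where gd: "\<And>j. j < n \<Longrightarrow> gg j \<in> SS \<and> \<eta> j \<in> DD"
    and rep: "\<And>x. x \<in> SS \<Longrightarrow> x = (\<Sum>j<n. sm (\<eta> j x) (gg j))"
    unfolding has_rank_def by blast
  define G where "G j = (if j < n then (gg j, 0) else (0, \<eta> (j - n)))" for j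
  define E where "E j p = (if p \<in> CC then (if j < n then \<eta> j (fst p) else snd p (gg (j - n))) else 0)" for j p
  have GC: "G j \<in> CC" if "j < n + n" for j using that gd[of j] gd[of "j - n"]
    by (auto simp: G_def C_mem D_0)
  have ED: "E j \<in> dual_on CC ss" if "j < n + n" for j
  proof -
    have m: "ss f p \<in> CC" if "p \<in> CC" for f p using that by (auto simp: C_mem sum_smult_def D_scal)
    have a: "p + q \<in> CC" if "p \<in> CC" "q \<in> CC" for p q using that by (auto simp: C_mem D_plus)
    have jn: "\<not> j < n \<Longrightarrow> j - n < n" using that by linarith
    show ?thesis using gd[of j] gd[of "j - n"] that jn
      unfolding dual_on_def[of CC ss]
      by (auto simp: E_def m a C_mem D_add D_sm sum_smult_def D_plus D_scal)
  qed
  have repC: "p = (\<Sum>j<n+n. ss (E j p) (G j))" if p: "p \<in> CC" for p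
  proof -
    obtain x \<alpha> where pe: "p = (x, \<alpha>)" by (cases p)
    have x: "x \<in> SS" and al: "\<alpha> \<in> DD" using p pe by (auto simp: C_mem)
    have pC: "(x, \<alpha>) \<in> CC" using p pe by simp
    have s1: "(\<Sum>j<n. ss (E j p) (G j)) = (\<Sum>j<n. (sm (\<eta> j x) (gg j), 0))"
      by (rule sum.cong) (auto simp: E_def G_def pC pe sum_smult_def fun_eq_iff)
    have s2: "(\<Sum>j<n. ss (E (n + j) p) (G (n + j))) = (\<Sum>j<n. (0, (\<lambda>y. \<alpha> (gg j) * \<eta> j y)))"
      by (rule sum.cong) (auto simp: E_def G_def pC pe sum_smult_def fun_eq_iff)
    have fx: "fst (\<Sum>j<n. (sm (\<eta> j x) (gg j), 0::'a\<Rightarrow>'f)) = x" by (simp add: fst_sum rep[OF x, symmetric])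
    have fa: "snd (\<Sum>j<n. (0::'a, (\<lambda>y. \<alpha> (gg j) * \<eta> j y))) = \<alpha>"
    proof -
      have pt: "\<alpha> y = (\<Sum>j<n. \<alpha> (gg j) * \<eta> j y)" for y
      proof (cases "y \<in> SS")
        case True
        have "\<alpha> y = \<alpha> (\<Sum>j<n. sm (\<eta> j y) (gg j))" using arg_cong[OF rep[OF True], of \<alpha>] .
        also have "\<dots> = (\<Sum>j<n. \<alpha> (sm (\<eta> j y) (gg j)))" using al gd by (intro D_sum) auto
        also have "\<dots> = (\<Sum>j<n. \<alpha> (gg j) * \<eta> j y)" using al gd by (intro sum.cong) (auto simp: D_sm mult.commute)
        finally show ?thesis .
      next
        case False thus ?thesis using al gd by (simp add: D_out)
      qed
      have eq: "snd (\<Sum>j<n. (0::'a, (\<lambda>y. \<alpha> (gg j) * \<eta> j y))) = (\<lambda>y. \<Sum>j<n. \<alpha> (gg j) * \<eta> j y)"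
        by (simp add: snd_sum fun_eq_iff sum_fun_apply)
      show ?thesis unfolding eq by (rule ext, rule pt[symmetric])
    qed
    have "(\<Sum>j<n+n. ss (E j p) (G j)) = (\<Sum>j<n. (sm (\<eta> j x) (gg j), 0)) + (\<Sum>j<n. (0, (\<lambda>y. \<alpha> (gg j) * \<eta> j y)))"
      unfolding sum_split_nat s1 s2 ..
    also have "\<dots> = (x, \<alpha>)"
    proof (rule prod_eqI)
      have fz: "fst (\<Sum>j<n. (0::'a, (\<lambda>y. \<alpha> (gg j) * \<eta> j y))) = 0" by (simp add: fst_sum)
      have sz: "snd (\<Sum>j<n. (sm (\<eta> j x) (gg j), 0::'a\<Rightarrow>'f)) = 0" by (simp add: snd_sum)
      show "fst ((\<Sum>j<n. (sm (\<eta> j x) (gg j), 0::'a\<Rightarrow>'f)) + (\<Sum>j<n. (0::'a, (\<lambda>y. \<alpha> (gg j) * \<eta> j y)))) = fst (x, \<alpha>)"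
        by (simp only: fst_add fx fz add_0_right fst_conv)
      show "snd ((\<Sum>j<n. (sm (\<eta> j x) (gg j), 0::'a\<Rightarrow>'f)) + (\<Sum>j<n. (0::'a, (\<lambda>y. \<alpha> (gg j) * \<eta> j y)))) = snd (x, \<alpha>)"
        by (simp only: snd_add fa sz add_0_left snd_conv)
    qed
    finally show ?thesis using pe by simp
  qed
  show ?thesis unfolding has_rank_def using GC ED repC by blast
qed

lemma bij_C: "bij_betw PH CC CC"
proof (rule bij_betw_byWitness[where f'="\<lambda>p. (ih (fst p), dgi (snd p))"])
  show "\<forall>a\<in>CC. (ih (fst (PH a)), dgi (snd (PH a))) = a"
    by (auto simp: C_mem sum_phi_def dgi_dg prod_eq_iff)
  show "\<forall>a\<in>CC. PH (ih (fst a), dgi (snd a)) = a"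
    by (auto simp: C_mem sum_phi_def dg_dgi prod_eq_iff)
  show "PH ` CC \<subseteq> CC" by (auto simp: C_mem sum_phi_def dg_D)
  show "(\<lambda>p. (ih (fst p), dgi (snd p))) ` CC \<subseteq> CC" by (auto simp: C_mem dgi_D)
qed

end


context pk begin

lemma tn_plus: "X \<in> SS \<Longrightarrow> tn X (\<alpha> + \<beta>) w = tn X \<alpha> w + tn X \<beta> w" by (simp add: tn_eq)
lemma dg_diff: "dg (\<lambda>y. a y - b y) w = dg a w - dg b w" by (simp add: dg_eq)

lemma L_hb: "hom_bundle ps CC ss PH"
proof -
  have add: "\<forall>x\<in>CC. \<forall>y\<in>CC. PH (x + y) = PH x + PH y"
    by (auto simp: sum_phi_def fun_eq_iff dg_eq)
  have smm: "\<forall>f. \<forall>x\<in>CC. PH (ss f x) = ss (ps f) (PH x)"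
    by (auto simp: sum_phi_def sum_smult_def fun_eq_iff dg_eq)
  show ?thesis unfolding hom_bundle_def vector_bundle_def
    using RA module_C rank_C bij_C add smm by blast
qed

lemma L_cl: "\<forall>x\<in>CC. \<forall>y\<in>CC. BB x y \<in> CC"
  by (auto simp: C_mem sum_bracket_def intro!: D_minus_fun tn_D)

lemma L_add: "\<forall>x\<in>CC. \<forall>y\<in>CC. \<forall>z\<in>CC. BB (x + y) z = BB x z + BB y z"
  by (auto simp: C_mem sum_bracket_def br_addl tn_addX tn_plus fun_eq_iff)

lemma L_smc: "\<forall>c. \<forall>x\<in>CC. \<forall>y\<in>CC. BB (ss (of_real c) x) y = ss (of_real c) (BB x y)"
  by (auto simp: C_mem sum_bracket_def sum_smult_def br_smc tn_smX tn_sm\<xi> fun_eq_iff algebra_simps)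

lemma L_skew: "\<forall>x\<in>CC. \<forall>y\<in>CC. BB x y = - BB y x"
proof (intro ballI)
  fix p q :: "'a \<times> ('a \<Rightarrow> 'f)"
  have "br (fst p) (fst q) = - br (fst q) (fst p)" by (rule br_skew)
  thus "BB p q = - BB q p" by (simp add: sum_bracket_def fun_eq_iff)
qed

lemma L_ph: "\<forall>x\<in>CC. \<forall>y\<in>CC. PH (BB x y) = BB (PH x) (PH y)"
  by (auto simp: C_mem sum_bracket_def sum_phi_def br_ph dg_diff dg_tn fun_eq_iff)

lemma L_jac: "\<forall>x\<in>CC. \<forall>y\<in>CC. \<forall>z\<in>CC. BB (PH x) (BB y z) + BB (PH y) (BB z x) + BB (PH z) (BB x y) = 0"
proof (intro ballI)
  fix p q r assume p: "p \<in> CC" and q: "q \<in> CC" and r: "r \<in> CC"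
  obtain X \<alpha> where pe: "p = (X, \<alpha>)" by (cases p)
  obtain Y \<beta> where qe: "q = (Y, \<beta>)" by (cases q)
  obtain Z \<gamma> where re: "r = (Z, \<gamma>)" by (cases r)
  have X: "X \<in> SS" and al: "\<alpha> \<in> DD" using p pe by (auto simp: C_mem)
  have Y: "Y \<in> SS" and be: "\<beta> \<in> DD" using q qe by (auto simp: C_mem)
  have Z: "Z \<in> SS" and ga: "\<gamma> \<in> DD" using r re by (auto simp: C_mem)
  have sndeq: "tn (ph X) (\<lambda>y. tn Y \<gamma> y - tn Z \<beta> y) w - tn (br Y Z) (dg \<alpha>) w
      + (tn (ph Y) (\<lambda>y. tn Z \<alpha> y - tn X \<gamma> y) w - tn (br Z X) (dg \<beta>) w)
      + (tn (ph Z) (\<lambda>y. tn X \<beta> y - tn Y \<alpha> y) w - tn (br X Y) (dg \<gamma>) w) = 0" for w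
  proof -
    have J1: "tn (ph X) (tn Y \<gamma>) w - tn (ph Y) (tn X \<gamma>) w - tn (br X Y) (dg \<gamma>) w = 0" by (rule Jrep[OF X Y ga])
    have J2: "tn (ph Y) (tn Z \<alpha>) w - tn (ph Z) (tn Y \<alpha>) w - tn (br Y Z) (dg \<alpha>) w = 0" by (rule Jrep[OF Y Z al])
    have J3: "tn (ph Z) (tn X \<beta>) w - tn (ph X) (tn Z \<beta>) w - tn (br Z X) (dg \<beta>) w = 0" by (rule Jrep[OF Z X be])
    have e1: "tn (ph X) (\<lambda>y. tn Y \<gamma> y - tn Z \<beta> y) w = tn (ph X) (tn Y \<gamma>) w - tn (ph X) (tn Z \<beta>) w"
      using X by (simp add: tn_diff\<xi>)
    have e2: "tn (ph Y) (\<lambda>y. tn Z \<alpha> y - tn X \<gamma> y) w = tn (ph Y) (tn Z \<alpha>) w - tn (ph Y) (tn X \<gamma>) w"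
      using Y by (simp add: tn_diff\<xi>)
    have e3: "tn (ph Z) (\<lambda>y. tn X \<beta> y - tn Y \<alpha> y) w = tn (ph Z) (tn X \<beta>) w - tn (ph Z) (tn Y \<alpha>) w"
      using Z by (simp add: tn_diff\<xi>)
    have "tn (ph X) (tn Y \<gamma>) w - tn (ph X) (tn Z \<beta>) w - tn (br Y Z) (dg \<alpha>) w
      + (tn (ph Y) (tn Z \<alpha>) w - tn (ph Y) (tn X \<gamma>) w - tn (br Z X) (dg \<beta>) w)
      + (tn (ph Z) (tn X \<beta>) w - tn (ph Z) (tn Y \<alpha>) w - tn (br X Y) (dg \<gamma>) w)
     = (tn (ph X) (tn Y \<gamma>) w - tn (ph Y) (tn X \<gamma>) w - tn (br X Y) (dg \<gamma>) w)
      + (tn (ph Y) (tn Z \<alpha>) w - tn (ph Z) (tn Y \<alpha>) w - tn (br Y Z) (dg \<alpha>) w)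
      + (tn (ph Z) (tn X \<beta>) w - tn (ph X) (tn Z \<beta>) w - tn (br Z X) (dg \<beta>) w)"
      by (simp add: algebra_simps)
    also have "\<dots> = 0" by (simp only: J1 J2 J3 add_0_right)
    finally show ?thesis unfolding e1 e2 e3 .
  qed
  have "fst (BB (PH p) (BB q r) + BB (PH q) (BB r p) + BB (PH r) (BB p q)) = 0"
    using jac[of X Y Z] by (simp add: pe qe re sum_bracket_def sum_phi_def)
  moreover have "snd (BB (PH p) (BB q r) + BB (PH q) (BB r p) + BB (PH r) (BB p q)) = 0"
    using sndeq by (simp add: pe qe re sum_bracket_def sum_phi_def fun_eq_iff)
  ultimately show "BB (PH p) (BB q r) + BB (PH q) (BB r p) + BB (PH r) (BB p q) = 0" by (simp add: prod_eq_iff)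
qed

lemma L_an1: "\<forall>x\<in>CC. phi_derivation ps (AN x)" by (simp add: sum_anchor_def an_der)
lemma L_an2: "\<forall>x\<in>CC. \<forall>y\<in>CC. AN (x + y) = (\<lambda>g. AN x g + AN y g)" by (simp add: sum_anchor_def an_add fun_eq_iff)
lemma L_an3: "\<forall>f. \<forall>x\<in>CC. AN (ss f x) = (\<lambda>g. f * AN x g)" by (simp add: sum_anchor_def sum_smult_def an_sm fun_eq_iff)
lemma L_leib: "\<forall>f. \<forall>x\<in>CC. \<forall>y\<in>CC. BB x (ss f y) = ss (ps f) (BB x y) + ss (AN (PH x) f) (PH y)"
  by (auto simp: C_mem sum_bracket_def sum_smult_def sum_anchor_def sum_phi_def leib tn_smX tn_sm\<xi> fun_eq_iff algebra_simps)
lemma L_an4: "\<forall>x\<in>CC. \<forall>f. ps (AN x f) = AN (PH x) (ps f)" by (simp add: sum_anchor_def sum_phi_def an_ps)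
lemma L_an5: "\<forall>x\<in>CC. \<forall>y\<in>CC. \<forall>f. AN (BB x y) (ps f) = AN (PH x) (AN y f) - AN (PH y) (AN x f)"
  by (simp add: sum_anchor_def sum_phi_def sum_bracket_def an_br)

lemma main: "hom_Lie_algebroid ps CC ss PH BB AN"
  unfolding hom_Lie_algebroid_def
  using L_hb L_cl L_add L_smc L_skew L_ph L_jac L_an1 L_an2 L_an3 L_leib L_an4 L_an5 by blast

end

theorem mainTheorem9:
  fixes ps :: "'f::{comm_ring_1,real_algebra_1} \<Rightarrow> 'f"
    and sm :: "'f \<Rightarrow> 'a::ab_group_add \<Rightarrow> 'a"
    and ph :: "'a \<Rightarrow> 'a" and br :: "'a \<Rightarrow> 'a \<Rightarrow> 'a" and an :: "'a \<Rightarrow> 'f \<Rightarrow> 'f"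
    and K :: "'a \<Rightarrow> 'a" and g :: "'a \<Rightarrow> 'a \<Rightarrow> 'f" and nb :: "'a \<Rightarrow> 'a \<Rightarrow> 'a"
  assumes "para_Kahler ps sm ph br an K g nb"
  shows "hom_Lie_algebroid ps (sum_carrier (A1 ph K) sm) (sum_smult sm) (sum_phi ps (A1 ph K) ph)
           (sum_bracket br (dual_nabla ps (A1 ph K) ph an nb)) (sum_anchor an)"
proof -
  interpret pk ps sm ph br an K g nb using assms by (unfold_locales)
  show ?thesis by (rule main)
qed



end
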